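(* Let $N\ge 1$ be an integer, and let $1\le r\le N+1$ and $0\le i\le r$ be integers. Then \[ a^{(\lambda)}_{i,r-i}(N+1,x)=(-1)^{N+1+i-r}\, i!\, S_{1,i-1}(r-i)\, N!\, H_{N,r-1}\,(x)_{r-i}. \]
   Context: Let $x$ be a variable. $(x)_0=1$ and $(x)_n=x(x-1)\cdots(x-n+1)$ for $n\ge1$ (falling factorial). Generalized harmonic numbers: $H_{N,0}=1$ for all integers $N\ge 0$; $H_{N,1}=1+\frac12+\cdots+\frac1N$ for $N\ge1$; and for $2\le j\le N$, \[H_{N,j}=\frac{H_{N-1,j-1}}{N}+\frac{H_{N-2,j-1}}{N-1}+\cdots+\frac{H_{j-1,j-1}}{j}.\] Generalized Changhee power sums (for $k=1$), for integers $N\ge0$: $S_{1,-1}(N)=1$, $S_{1,0}(N)=N+1$, $S_{1,j}(N)=\sum_{l=0}^{N}S_{1,j-1}(l)$ for $j\ge1$. The coefficients $a^{(\lambda)}_{i,j}(N,x)$ (polynomials in $x$, indexed by integers $N\ge1$ and $i,j\ge0$ with $1\le i+j\le N$) are defined recursively by $a^{(\lambda)}_{1,0}(1,x)=-1$, $a^{(\lambda)}_{0,1}(1,x)=x$, and for $N\ge1$, $i,j\ge0$, $1\le i+j\le N+1$: \[ a^{(\lambda)}_{i,j}(N+1,x)=-N\,a^{(\lambda)}_{i,j}(N,x)-i\,a^{(\lambda)}_{i-1,j}(N,x)+(x-j+1)\,a^{(\lambda)}_{i,j-1}(N,x), \] with the convention that $a^{(\lambda)}_{i,j}(N,x)=0$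 whenever $i<0$, $j<0$, $i+j=0$, or $i+j>N$. (These are exactly the coefficients arising from repeatedly differentiating $F(t;x,\lambda)=\frac{2\lambda}{2\lambda+\log(1+\lambda t)}\bigl(1+\lambda^{-1}\log(1+\lambda t)\bigr)^x$ in the form $F^{(N)}=\lambda^N(1+\lambda t)^{-N}\sum_{1\le i+j\le N}a^{(\lambda)}_{i,j}(N,x)(2\lambda+\log(1+\lambda t))^{-i}(\lambda+\log(1+\lambda t))^{-j}F$.) *)

theory Defs
  imports Complex_Main
begin

definition falling :: "real \<Rightarrow> nat \<Rightarrow> real" where
  "falling x n = (\<Prod>k<n. x - of_nat k)"

text \<open>Generalized harmonic numbers H_{N,j}: H_{N,0} = 1 and
  H_{N,j+1} = sum_{m=j}^{N-1} H_{m,j}/(m+1) (this gives H_{N,1} = 1 + ... + 1/N).\<close>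
fun genH :: "nat \<Rightarrow> nat \<Rightarrow> real" where
  "genH N 0 = 1"
| "genH N (Suc j) = (\<Sum>m = j..<N. genH m j / of_nat (m + 1))"

text \<open>Shifted Changhee sums: Saux k n = S_{1,k-1}(n).\<close>
fun Saux :: "nat \<Rightarrow> nat \<Rightarrow> real" where
  "Saux 0 n = 1"
| "Saux (Suc k) n = (\<Sum>l = 0..n. Saux k l)"

definition S1 :: "int \<Rightarrow> nat \<Rightarrow> real" where
  "S1 j n = Saux (nat (j + 1)) n"

text \<open>Coefficients a_{i,j}(N,x); the value for N = 0 is a convention (never used).\<close>
fun acoef :: "nat \<Rightarrow> nat \<Rightarrow> nat \<Rightarrow> real \<Rightarrow> real" where
  "acoef 0 i j x = 0"
| "acoef (Suc 0) i j x =
     (if i = 1 \<and> j = 0 then -1 else if i = 0 \<and> j = 1 then x else 0)"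
| "acoef (Suc (Suc n)) i j x =
     (if i + j = 0 \<or> i + j > n + 2 then 0
      else - of_nat (n + 1) * acoef (Suc n) i j x
           - (if i > 0 then of_nat i * acoef (Suc n) (i - 1) j x else 0)
           + (if j > 0 then (x - of_nat j + 1) * acoef (Suc n) i (j - 1) x else 0))"

end

theory Submission
  imports Defs
begin

lemma genH_zero: "k > N \<Longrightarrow> genH N k = 0"
  by (cases k) auto

lemma genH_rec: "genH (Suc M) (Suc k) = genH M (Suc k) + genH M k / of_nat (M + 1)"
proof (cases "k \<le> M")
  case True
  then show ?thesis by (simp add: sum.atLeastLessThan_Suc)
next
  case False
  then show ?thesis by (simp add: genH_zero)
qed

lemma falling_Suc: "falling x (Suc j) = falling x j * (x - of_nat j)"
  by (simp add: falling_def)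

lemma Saux_choose: "Saux k n = of_nat ((n + k) choose k)"
proof (induction k arbitrary: n)
  case 0 then show ?case by simp
next
  case (Suc k)
  note IHk = Suc.IH
  show ?case
  proof (induction n)
    case 0 then show ?case using IHk[of 0] by simp
  next
    case (Suc n)
    have "Saux (Suc k) (Suc n) = Saux (Suc k) n + Saux k (Suc n)" by simp
    also have "\<dots> = of_nat ((n + Suc k) choose Suc k) + of_nat ((Suc n + k) choose k)"
      using Suc.IH IHk[of "Suc n"] by (simp only:)
    also have "\<dots> = of_nat ((Suc n + Suc k) choose Suc k)"
      by (simp add: add.commute)
    finally show ?case .
  qed
qed

lemma acoef_00: "acoef M 0 0 x = 0"
  by (cases M; cases "M - 1") auto

definition Fm :: "nat \<Rightarrow> nat \<Rightarrow> nat \<Rightarrow> real \<Rightarrow> real" where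
  "Fm M i j x = (-1) ^ (M + j) * (fact (i + j) / fact j) * fact (M - 1)
      * genH (M - 1) (i + j - 1) * falling x j"

lemma fact_div_Suc: "of_nat (Suc j) / (fact (Suc j) :: real) = 1 / fact j"
proof -
  have "fact (Suc j) = of_nat (Suc j) * (fact j :: real)" by (rule fact_Suc)
  then show ?thesis by simp
qed

lemma main: "M \<ge> 1 \<Longrightarrow> i + j \<ge> 1 \<Longrightarrow> acoef M i j x = Fm M i j x"
proof (induction M arbitrary: i j rule: nat_induct_at_least)
  case base
  show ?case
  proof (cases "i + j \<ge> 2")
    case True
    then have "genH 0 (i + j - 1) = 0" by (intro genH_zero) auto
    then show ?thesis using True by (auto simp: Fm_def)
  next
    case False
    with base have "(i = 1 \<and> j = 0) \<or> (i = 0 \<and> j = 1)" by auto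
    then show ?thesis by (auto simp: Fm_def falling_def)
  qed
next
  case (Suc M)
  obtain n where Mn: "M = Suc n" using Suc.hyps by (cases M) auto
  define r where "r = i + j"
  define g where "g k = fact (M - 1) * genH (M - 1) k" for k
  show ?case
  proof (cases "i + j > M + 1")
    case True
    then have "genH M (i + j - 1) = 0" by (intro genH_zero) auto
    then show ?thesis using True Suc.prems Mn by (auto simp: Fm_def)
  next
    case False
    have rec: "acoef (Suc M) i j x = - of_nat M * acoef M i j x
           - (if i > 0 then of_nat i * acoef M (i - 1) j x else 0)
           + (if j > 0 then (x - of_nat j + 1) * acoef M i (j - 1) x else 0)"
      using False Suc.prems Mn by simp
    have A1: "acoef M i j x = Fm M i j x" using Suc.IH Suc.prems by blast
    show ?thesis
    proof (cases "r = 1")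
      case True
      have T2: "(if i > 0 then of_nat i * acoef M (i - 1) j x else 0) = 0"
        using True acoef_00 unfolding r_def by (cases i) auto
      have T3: "(if j > 0 then (x - of_nat j + 1) * acoef M i (j - 1) x else 0) = 0"
        using True acoef_00 unfolding r_def by (cases j) auto
      have "fact M = of_nat M * (fact (M - 1) :: real)" using Mn by simp
      then show ?thesis using rec T2 T3 A1 True unfolding r_def Fm_def
        by (simp add: algebra_simps)
    next
      case False
      then have r2: "r \<ge> 2" using Suc.prems r_def by auto
      have T2: "(if i > 0 then of_nat i * acoef M (i - 1) j x else 0)
          = of_nat i * (-1) ^ (M + j) * (fact (r - 1) / fact j) * g (r - 2) * falling x j"
      proof (cases i)
        case (Suc i')
        have "acoef M (i - 1) j x = Fm M (i - 1) j x" using Suc.IH r2 Suc unfolding r_def by auto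
        moreover have "i - 1 + j = r - 1" "i - 1 + j - 1 = r - 2" using Suc r_def by auto
        ultimately show ?thesis using Suc unfolding Fm_def g_def by simp
      qed simp
      have T3: "(if j > 0 then (x - of_nat j + 1) * acoef M i (j - 1) x else 0)
          = - of_nat j * (-1) ^ (M + j) * (fact (r - 1) / fact j) * g (r - 2) * falling x j"
      proof (cases j)
        case (Suc j')
        have a3: "acoef M i (j - 1) x = Fm M i j' x" using Suc.IH r2 Suc unfolding r_def by auto
        have ij: "i + j' = r - 1" "i + j' - 1 = r - 2" using Suc r_def by auto
        have rr: "r - 1 - 1 = r - 2" by simp
        have fl: "(x - of_nat j + 1) * falling x j' = falling x j"
          using Suc by (simp add: falling_Suc)
        have "of_nat j / (fact j :: real) = 1 / fact j'"
          using Suc fact_div_Suc by simp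
        have "(x - of_nat j + 1) * acoef M i (j - 1) x
           = (-1) ^ (M + j') * (fact (r - 1) / fact j') * g (r - 2) * ((x - of_nat j + 1) * falling x j')"
          unfolding a3 Fm_def g_def ij by (simp only: mult_ac rr)
        then have e1: "(x - of_nat j + 1) * acoef M i (j - 1) x
           = (-1) ^ (M + j') * (fact (r - 1) / fact j') * g (r - 2) * falling x j"
          unfolding fl .
        have s1: "(-1) ^ (M + j) = - ((-1) ^ (M + j') :: real)" using Suc by simp
        have s2: "of_nat j * (fact (r - 1) / fact j) = (fact (r - 1) / fact j' :: real)"
        proof -
          have "of_nat j * (fact (r - 1) / fact j) = fact (r - 1) * (of_nat j / (fact j :: real))"
            by simp
          also have "\<dots> = fact (r - 1) / fact j'"
            using \<open>of_nat j / (fact j :: real) = 1 / fact j'\<close> by simp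
          finally show ?thesis .
        qed
        have e2: "- of_nat j * (-1) ^ (M + j) * (fact (r - 1) / fact j)
           = (-1) ^ (M + j') * (fact (r - 1) / fact j' :: real)"
        proof -
          have "\<And>P Q :: real. - of_nat j * (- P) * Q = P * (of_nat j * Q)" by simp
          then show ?thesis unfolding s1 s2[symmetric] by blast
        qed
        show ?thesis using e1 e2 Suc by simp
      qed simp
      have G: "fact M * genH M (r - 1) = of_nat M * g (r - 1) + g (r - 2)"
      proof -
        obtain k where k: "r - 1 = Suc k" "r - 2 = k" using r2 by (cases "r - 1") auto
        have "fact M * genH M (r - 1) = (of_nat n + 1) * fact n * (genH n (Suc k) + genH n k / of_nat (n + 1))"
          unfolding Mn k by (simp add: genH_rec del: genH.simps)
        also have "\<dots> = (of_nat n + 1) * (fact n * genH n (Suc k)) + fact n * genH n k"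
          by (simp add: field_simps del: genH.simps)
        finally show ?thesis unfolding g_def Mn k by (simp del: genH.simps)
      qed
      have fr: "fact r = of_nat r * (fact (r - 1) :: real)"
        using r2 by (metis Suc_diff_1 fact_Suc less_le_trans pos2 zero_less_Suc)
      have A1': "acoef M i j x = (-1) ^ (M + j) * (fact r / fact j) * g (r - 1) * falling x j"
        unfolding A1 Fm_def g_def r_def by simp
      have "acoef (Suc M) i j x = - ((-1) ^ (M + j) * (falling x j / fact j)) *
          (of_nat M * fact r * g (r - 1) + (of_nat i + of_nat j) * fact (r - 1) * g (r - 2))"
        unfolding rec A1' T2 T3 by (simp add: algebra_simps)
      also have "\<dots> = - ((-1) ^ (M + j) * (falling x j / fact j)) * (fact r * (fact M * genH M (r - 1)))"
      proof -
        have "(of_nat i + of_nat j) * fact (r - 1) = (fact r :: real)"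
          using fr unfolding r_def by simp
        then show ?thesis unfolding G by (simp add: algebra_simps)
      qed
      also have "\<dots> = Fm (Suc M) i j x"
        unfolding Fm_def r_def by simp
      finally show ?thesis .
    qed
  qed
qed

theorem theorem2:
  fixes N r i :: nat and x :: real
  assumes "N \<ge> 1" and "1 \<le> r" and "r \<le> N + 1" and "i \<le> r"
  shows "acoef (N + 1) i (r - i) x =
    (-1) ^ (N + 1 + i - r) * fact i * S1 (int i - 1) (r - i) * fact N
      * genH N (r - 1) * falling x (r - i)"
proof -
  define d where "d = r - i"
  have rd: "r = i + d" using assms d_def by simp
  have "acoef (N + 1) i d x = Fm (N + 1) i d x"
    using main[of "N + 1" i d x] assms rd by simp
  also have "\<dots> = (-1) ^ (N + 1 + d) * (fact r / fact d) * fact N * genH N (r - 1) * falling x d"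
    unfolding Fm_def rd by simp
  also have "(-1) ^ (N + 1 + d) = ((-1) ^ (N + 1 + i - r) :: real)"
  proof -
    have "N + 1 + d = (N + 1 + i - r) + 2 * d" using assms rd by simp
    then have "(-1) ^ (N + 1 + d) = ((-1) ^ (N + 1 + i - r) :: real) * ((-1) ^ 2) ^ d"
      by (simp only: power_add power_mult)
    then show ?thesis by simp
  qed
  also have "fact r / fact d = fact i * S1 (int i - 1) d"
  proof -
    have "S1 (int i - 1) d = of_nat (r choose i)"
      unfolding S1_def Saux_choose rd by (simp add: add.commute)
    moreover have "of_nat (r choose i) = (fact r / (fact i * fact d) :: real)"
      using binomial_fact[of i r] rd by simp
    ultimately show ?thesis by simp
  qed
  finally show ?thesis unfolding d_def by (simp add: mult.assoc)
qed

end
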